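(* Let $0<q<1$, $I=[0,b)$ with $0<b\le\infty$, $R,S,T:I\to\mathbb{R}$ continuous. For an admissible function $u$ and $t\in\mathbb{R}$ with $1+tJ_u(x)\ne0$ on $I$ define $(\mathcal{B}^+_tu)(x)=u(x)+\dfrac{tE_u(x)}{1+tJ_u(x)}$. Then for $t_1,t_2\in\mathbb{R}$ and admissible $u_0$ such that $\mathcal{B}^+_{t_2}u_0$ is defined and admissible, $\mathcal{B}^+_{t_1}(\mathcal{B}^+_{t_2}u_0)$ is defined, and $1-(1-q)x(R(x)+S(x)\,\mathcal{B}^+_{t_1}\mathcal{B}^+_{t_2}u_0(x))>0$ on $I$, one has $$\mathcal{B}^+_{t_1}\circ\mathcal{B}^+_{t_2}u_0=\mathcal{B}^+_{t_1+t_2}u_0 .$$ In particular, for a fixed $V$, the maps $\mathcal{B}^+_t$ act (where defined) as a one-parameter group on the solutions of the $q$-Riccati equation $V(x)=\partial_qu(x)-T(x)u(x)+R(x)u(qx)+S(x)u(x)u(qx)$, and this action is transitive on solutions $u$ continuous on $I$ with $1-(1-q)x(R(x)+S(x)u(x))>0$ on $I$: each such solution equals $\mathcal{B}^+_tu_0$ for $t=u(0)-u_0(0)$.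
   Context: $\partial_q f(x)=\dfrac{f(x)-f(qx)}{(1-q)x}$ for $x\neq0$; $\int_0^x f(t)\,d_qt=\sum_{n\ge0}(1-q)q^nx\,f(q^nx)$. A function $u:I\to\mathbb{R}$ is admissible if it is continuous on $I$ and for all $y\in I$: $1-(1-q)y(R(y)+u(y)S(y))>0$ and $1-(1-q)y(T(y)-u(qy)S(y))>0$. For admissible $u$: $$E_u(x)=\exp\Big(\frac{1}{1-q}\int_0^x\frac1y\ln\frac{1-(1-q)y[R(y)+u(y)S(y)]}{1-(1-q)y[T(y)-u(qy)S(y)]}d_qy\Big),\qquad J_u(x)=\int_0^x\frac{S(y)E_u(y)}{1-(1-q)y[R(y)+u(y)S(y)]}d_qy.$$ *)

theory Defs
  imports "HOL-Analysis.Analysis" "HOL-Library.Extended_Real"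
begin

definition Ivl :: "ereal \<Rightarrow> real set" where
  "Ivl b = {x. 0 \<le> x \<and> ereal x < b}"

definition qderiv :: "real \<Rightarrow> (real \<Rightarrow> real) \<Rightarrow> real \<Rightarrow> real" where
  "qderiv q f x = (f x - f (q * x)) / ((1 - q) * x)"

definition qint :: "real \<Rightarrow> (real \<Rightarrow> real) \<Rightarrow> real \<Rightarrow> real" where
  "qint q f x = (\<Sum>n. (1 - q) * q ^ n * x * f (q ^ n * x))"

definition admissible ::
  "real \<Rightarrow> ereal \<Rightarrow> (real \<Rightarrow> real) \<Rightarrow> (real \<Rightarrow> real) \<Rightarrow> (real \<Rightarrow> real) \<Rightarrow> (real \<Rightarrow> real) \<Rightarrow> bool" where
  "admissible q b R S T u \<longleftrightarrow> continuous_on (Ivl b) u \<and>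
     (\<forall>y\<in>Ivl b. 1 - (1 - q) * y * (R y + u y * S y) > 0 \<and>
                 1 - (1 - q) * y * (T y - u (q * y) * S y) > 0)"

definition Efun ::
  "real \<Rightarrow> (real \<Rightarrow> real) \<Rightarrow> (real \<Rightarrow> real) \<Rightarrow> (real \<Rightarrow> real) \<Rightarrow> (real \<Rightarrow> real) \<Rightarrow> real \<Rightarrow> real" where
  "Efun q R S T u x = exp (1 / (1 - q) *
     qint q (\<lambda>y. (1 / y) * ln ((1 - (1 - q) * y * (R y + u y * S y)) /
                              (1 - (1 - q) * y * (T y - u (q * y) * S y)))) x)"

definition Jfun ::
  "real \<Rightarrow> (real \<Rightarrow> real) \<Rightarrow> (real \<Rightarrow> real) \<Rightarrow> (real \<Rightarrow> real) \<Rightarrow> (real \<Rightarrow> real) \<Rightarrow> real \<Rightarrow> real" where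
  "Jfun q R S T u x = qint q (\<lambda>y. S y * Efun q R S T u y /
                              (1 - (1 - q) * y * (R y + u y * S y))) x"

definition Bdefined ::
  "real \<Rightarrow> ereal \<Rightarrow> (real \<Rightarrow> real) \<Rightarrow> (real \<Rightarrow> real) \<Rightarrow> (real \<Rightarrow> real) \<Rightarrow> real \<Rightarrow> (real \<Rightarrow> real) \<Rightarrow> bool" where
  "Bdefined q b R S T t u \<longleftrightarrow> (\<forall>x\<in>Ivl b. 1 + t * Jfun q R S T u x \<noteq> 0)"

definition Bplus ::
  "real \<Rightarrow> (real \<Rightarrow> real) \<Rightarrow> (real \<Rightarrow> real) \<Rightarrow> (real \<Rightarrow> real) \<Rightarrow> real \<Rightarrow> (real \<Rightarrow> real) \<Rightarrow> real \<Rightarrow> real" where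
  "Bplus q R S T t u x = u x + t * Efun q R S T u x / (1 + t * Jfun q R S T u x)"

text \<open>u solves the q-Riccati equation with inhomogeneity V on I (at x \<noteq> 0,
  where the q-derivative is defined).\<close>
definition riccati_sol ::
  "real \<Rightarrow> ereal \<Rightarrow> (real \<Rightarrow> real) \<Rightarrow> (real \<Rightarrow> real) \<Rightarrow> (real \<Rightarrow> real) \<Rightarrow> (real \<Rightarrow> real) \<Rightarrow> (real \<Rightarrow> real) \<Rightarrow> bool" where
  "riccati_sol q b R S T V u \<longleftrightarrow> (\<forall>x\<in>Ivl b. x \<noteq> 0 \<longrightarrow>
     V x = qderiv q u x - T x * u x + R x * u (q * x) + S x * u x * u (q * x))"

end

theory Submission imports Defs begin

lemma alg1:
  fixes D D' t J J' h S E A R u :: real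
  assumes "D \<noteq> 0" "D = 1 + t*J" "D' = 1 + t*J'" "h*S*E = (J - J')*A" "A = 1 - h*(R + u*S)"
  shows "1 - h*(R + (u + t*E/D)*S) = A*D'/D"
proof -
  have "(1 - h*(R + (u + t*E/D)*S)) * D = A*D'"
  proof -
    have "(1 - h*(R + (u + t*E/D)*S)) * D = (1 - h*(R + u*S))*D - t*(h*S*E)"
      using assms(1) by (simp add: field_simps)
    also have "\<dots> = A*D - t*((J - J')*A)" using assms(4,5) by simp
    also have "\<dots> = A*D'" using assms(2,3) by (simp add: algebra_simps)
    finally show ?thesis .
  qed
  then show ?thesis using assms(1) by (simp add: eq_divide_eq)
qed

lemma alg2:
  fixes D D' t J J' h S E E' A C T u' :: real
  assumes "D' \<noteq> 0" "A \<noteq> 0" "C \<noteq> 0" "D = 1 + t*J" "D' = 1 + t*J'" "h*S*E = (J - J')*A"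
    "E = E'*A/C" "C = 1 - h*(T - u'*S)"
  shows "1 - h*(T - (u' + t*E'/D')*S) = C*D/D'"
proof -
  have E': "E' = E*C/A" using assms(2,3,7) by (simp add: field_simps)
  have "h*S*E' = (h*S*E)*C/A" unfolding E' by simp
  also have "\<dots> = (J - J')*C" using assms(2,6) by simp
  finally have hse: "h*S*E' = (J - J')*C" .
  have "(1 - h*(T - (u' + t*E'/D')*S)) * D' = C*D"
  proof -
    have "(1 - h*(T - (u' + t*E'/D')*S)) * D' = (1 - h*(T - u'*S))*D' + t*(h*S*E')"
      using assms(1) by (simp add: field_simps)
    also have "\<dots> = C*D' + t*((J - J')*C)" using assms(8) hse by simp
    also have "\<dots> = C*D" using assms(4,5) by (simp add: algebra_simps)
    finally show ?thesis .
  qed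
  then show ?thesis using assms(1) by (simp add: eq_divide_eq)
qed

lemma alg3:
  fixes A C D D' E E' Ev Ev' Av Cv :: real
  assumes "A > 0" "C > 0" "D \<noteq> 0" "D' \<noteq> 0" "E' > 0"
    "Ev = Ev'*Av/Cv" "Av = A*D'/D" "Cv = C*D/D'" "E = E'*A/C"
  shows "Ev*D^2/E = Ev'*D'^2/E'"
proof -
  have Ev: "Ev = Ev'*A*D'^2/(C*D^2)" using assms(1-4,6-8) by (simp add: field_simps power2_eq_square)
  show ?thesis unfolding Ev assms(9) using assms(1-5) by (simp add: field_simps power2_eq_square)
qed

lemma alg4:
  fixes A D D' t J J' Av Ev E Jv Jv' h S :: real
  assumes "D \<noteq> 0" "D' \<noteq> 0" "A > 0" "D = 1 + t*J" "D' = 1 + t*J'" "Av = A*D'/D"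
    "Ev = E/D^2" "Jv = Jv' + h*(S*Ev/Av)" "h*S*E = (J - J')*A"
  shows "Jv - J/D = Jv' - J'/D'"
proof -
  have "h*(S*Ev/Av) = (h*S*E)/(A*D*D')"
    using assms(1-3) unfolding assms(6,7) by (simp add: field_simps power2_eq_square)
  also have "\<dots> = (J - J')/(D*D')" using assms(1-3) unfolding assms(9) by simp
  finally have "h*(S*Ev/Av) = (J - J')/(D*D')" .
  moreover have "J/D - J'/D' = (J - J')/(D*D')"
    using assms(1,2,4,5) by (simp add: field_simps)
  ultimately show ?thesis using assms(8) by simp
qed

lemma alg5:
  fixes D t1 t2 J u E :: real
  assumes "D \<noteq> 0" "D = 1 + t2*J" "1 + t1*(J/D) \<noteq> 0"
  shows "1 + (t1+t2)*J \<noteq> 0 \<and>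
    u + t2*E/D + t1*(E/D^2)/(1 + t1*(J/D)) = u + (t1+t2)*E/(1 + (t1+t2)*J)"
proof -
  define M where "M = 1 + t1*(J/D)"
  have M: "M \<noteq> 0" using assms(3) by (simp add: M_def)
  have DM: "D*M = D + t1*J" using assms(1) by (simp add: M_def field_simps)
  have e: "1 + (t1+t2)*J = D*M" by (subst DM) (simp add: assms(2) algebra_simps)
  then have nz: "1 + (t1+t2)*J \<noteq> 0" using assms(1) M by simp
  have "t2*E/D + t1*(E/D^2)/M = E*(t2*(D*M) + t1)/(D^2*M)"
    using assms(1) M by (simp add: field_simps power2_eq_square)
  also have "t2*(D*M) + t1 = (t1+t2)*D" by (subst DM) (simp add: assms(2) algebra_simps)
  also have "E*((t1+t2)*D)/(D^2*M) = (t1+t2)*E/(D*M)"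
    using assms(1) M by (simp add: power2_eq_square field_simps)
  finally have "t2*E/D + t1*(E/D^2)/M = (t1+t2)*E/(1 + (t1+t2)*J)" unfolding e .
  then show ?thesis using nz by (simp add: M_def)
qed

lemma alg6:
  fixes h V u u' z z' T R S :: real
  assumes "h \<noteq> 0" "V = (u - u')/h - T*u + R*u' + S*u*u'" "V = (z - z')/h - T*z + R*z' + S*z*z'"
  shows "(u - z)*(1 - h*(T - z'*S)) = (u' - z')*(1 - h*(R + S*u))"
proof -
  have "(u - u')/h - (z - z')/h = T*u - R*u' - S*u*u' - T*z + R*z' + S*z*z'"
    using assms(2,3) by linarith
  then have "h*((u - u')/h - (z - z')/h) = h*(T*u - R*u' - S*u*u' - T*z + R*z' + S*z*z')" by simp
  moreover have "h*((u - u')/h - (z - z')/h) = (u - u') - (z - z')"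
    using assms(1) by (simp add: field_simps)
  ultimately have e1: "(u - u') - (z - z') = h*(T*u - R*u' - S*u*u' - T*z + R*z' + S*z*z')" by simp
  from e1 show ?thesis by algebra
qed

lemma alg7:
  fixes A C Au h S w w' u u0 R E E' J J' :: real
  assumes "A > 0" "C > 0" "Au = 1 - h*(R + S*u)" "A = 1 - h*(R + u0*S)" "w = u - u0"
    "w \<noteq> 0" "w' \<noteq> 0" "w*C = w'*Au" "E = E'*A/C" "J = J' + h*(S*E/A)"
  shows "E/w - J = E'/w' - J'"
proof -
  have Au: "Au = A - h*S*w" unfolding assms(3,4,5) by (simp add: algebra_simps)
  have "E/w - h*(S*E/A) = E*Au/(w*A)" using assms(1,6) unfolding Au by (simp add: field_simps)
  also have "\<dots> = E'*Au/(w*C)" using assms(1,2,6,9) by (simp add: field_simps)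
  also have "\<dots> = E'/w'"
  proof -
    have "Au = w*C/w'" using assms(7,8) by (simp add: field_simps)
    then show ?thesis using assms(2,6,7) by (simp add: field_simps)
  qed
  finally show ?thesis using assms(10) by simp
qed

lemma alg8:
  fixes t w E J :: real
  assumes "t \<noteq> 0" "w \<noteq> 0" "E > 0" "E/w - J = 1/t"
  shows "1 + t*J \<noteq> 0 \<and> w = t*E/(1 + t*J)"
proof -
  have J: "J = E/w - 1/t" using assms(4) by simp
  have e: "1 + t*J = t*E/w" unfolding J using assms(1,2) by (simp add: field_simps)
  then have "1 + t*J \<noteq> 0" using assms by simp
  then show ?thesis unfolding e using assms by (simp add: field_simps)
qed


context
  fixes q :: real and b :: ereal and R S T :: "real \<Rightarrow> real"
  assumes q0: "0 < q" and q1: "q < 1" and b0: "0 < b"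
    and cR: "continuous_on (Ivl b) R" and cS: "continuous_on (Ivl b) S"
    and cT: "continuous_on (Ivl b) T"
begin

lemma Ivl_scale: "x \<in> Ivl b \<Longrightarrow> 0 \<le> c \<Longrightarrow> c \<le> 1 \<Longrightarrow> c * x \<in> Ivl b"
proof -
  assume x: "x \<in> Ivl b" and c: "0 \<le> c" "c \<le> 1"
  then have "0 \<le> x" "ereal x < b" by (auto simp: Ivl_def)
  moreover have "c * x \<le> x" using c \<open>0 \<le> x\<close> by (simp add: mult_left_le_one_le)
  ultimately show ?thesis using c unfolding Ivl_def
    by (auto intro: le_less_trans[of "ereal (c*x)" "ereal x" b])
qed

lemma Ivl_pow: "x \<in> Ivl b \<Longrightarrow> q^n * x \<in> Ivl b"
  using q0 q1 by (intro Ivl_scale) (auto simp: power_le_one)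

lemma Ivl_q: "x \<in> Ivl b \<Longrightarrow> q * x \<in> Ivl b"
  using q0 q1 by (intro Ivl_scale) auto

lemma Ivl_0: "0 \<in> Ivl b"
  using b0 by (simp add: Ivl_def zero_ereal_def)

lemma Ivl_nonneg: "x \<in> Ivl b \<Longrightarrow> 0 \<le> x"
  by (simp add: Ivl_def)

lemma pow_lim: "(\<lambda>n. q^n * x) \<longlonglongrightarrow> 0"
  using q0 q1 by (intro tendsto_mult_left_zero LIMSEQ_power_zero) auto

lemma cont_lim:
  assumes "continuous_on (Ivl b) f" "x \<in> Ivl b"
  shows "(\<lambda>n. f (q^n * x)) \<longlonglongrightarrow> f 0"
  by (rule continuous_on_tendsto_compose[OF assms(1) pow_lim Ivl_0])
     (use assms(2) Ivl_pow in auto)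

lemma cont_lim':
  assumes "continuous_on (Ivl b) f" "x \<in> Ivl b"
  shows "(\<lambda>n. f (q * (q^n * x))) \<longlonglongrightarrow> f 0"
proof -
  have "(\<lambda>n. f (q^(Suc n) * x)) \<longlonglongrightarrow> f 0"
    using LIMSEQ_Suc[OF cont_lim[OF assms]] .
  then show ?thesis by (simp add: mult.assoc)
qed

lemma qint_zero: "qint q g 0 = 0"
  by (simp add: qint_def)

lemma qint_shift:
  assumes "summable (\<lambda>n. (1-q)*q^n*x*g(q^n*x))"
  shows "qint q g x = (1-q)*x*g x + qint q g (q*x)"
proof -
  have "qint q g (q*x) = (\<Sum>n. (1-q)*q^(Suc n)*x*g(q^(Suc n)*x))"
    unfolding qint_def by (simp add: mult_ac)
  also have "\<dots> = qint q g x - (1-q)*x*g x"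
    using suminf_split_head[OF assms] by (simp add: qint_def)
  finally show ?thesis by simp
qed

lemma qint_tail:
  assumes "summable (\<lambda>n. (1-q)*q^n*x*g(q^n*x))"
  shows "(\<lambda>n. qint q g (q^n*x)) \<longlonglongrightarrow> 0"
proof -
  let ?f = "\<lambda>n. (1-q)*q^n*x*g(q^n*x)"
  have eq: "qint q g (q^n*x) = suminf ?f - (\<Sum>i<n. ?f i)" for n
  proof -
    have "qint q g (q^n*x) = (\<Sum>m. ?f (m + n))"
      unfolding qint_def by (simp add: power_add mult_ac)
    then show ?thesis using suminf_split_initial_segment[OF assms, of n] by simp
  qed
  have "(\<lambda>n. suminf ?f - (\<Sum>i<n. ?f i)) \<longlonglongrightarrow> suminf ?f - suminf ?f"
    by (intro tendsto_intros summable_LIMSEQ assms)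
  then show ?thesis by (simp add: eq)
qed

lemma bounded_summable:
  assumes "\<And>n. \<bar>g (q^n*x)\<bar> \<le> K" "0 \<le> x"
  shows "summable (\<lambda>n. (1-q)*q^n*x*g(q^n*x))"
proof (rule summable_comparison_test'[where N=0])
  show "summable (\<lambda>n. ((1-q)*x*K) * q^n)"
    using q0 q1 by (intro summable_mult summable_geometric) auto
  fix n
  have "norm ((1-q)*q^n*x*g(q^n*x)) = ((1-q)*x*q^n) * \<bar>g(q^n*x)\<bar>"
    using q0 q1 assms(2) by (simp add: abs_mult)
  also have "\<dots> \<le> ((1-q)*x*q^n) * K"
    using q0 q1 assms by (intro mult_left_mono) auto
  finally show "norm ((1-q)*q^n*x*g(q^n*x)) \<le> ((1-q)*x*K) * q^n" by (simp add: mult_ac)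
qed

lemma chain0:
  fixes \<phi> :: "real \<Rightarrow> real"
  assumes "\<And>n. \<phi> (q * (q^n*x)) = \<phi> (q^n*x)"
    "(\<lambda>n. \<phi> (q^n*x)) \<longlonglongrightarrow> L"
  shows "\<phi> x = L"
proof -
  have "\<phi> (q^n*x) = \<phi> x" for n
  proof (induction n)
    case (Suc n)
    have "\<phi> (q^Suc n * x) = \<phi> (q * (q^n*x))" by (simp add: mult.assoc)
    also have "\<dots> = \<phi> (q^n*x)" using assms(1) by simp
    finally show ?case using Suc by simp
  qed simp
  then have "(\<lambda>n. \<phi> (q^n*x)) = (\<lambda>n. \<phi> x)" by simp
  then have l: "(\<lambda>n. \<phi> x) \<longlonglongrightarrow> L" using assms(2) by simp
  have c: "(\<lambda>n. \<phi> x) \<longlonglongrightarrow> \<phi> x" by (rule tendsto_const)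
  from LIMSEQ_unique[OF c l] show ?thesis .
qed

lemma chain_const:
  fixes \<phi> :: "real \<Rightarrow> real"
  assumes "\<And>n. \<phi> (q * (q^n*x)) = \<phi> (q^n*x)"
  shows "\<phi> (q^n*x) = \<phi> x"
proof (induction n)
  case (Suc n)
  have "\<phi> (q^Suc n * x) = \<phi> (q * (q^n*x))" by (simp add: mult.assoc)
  also have "\<dots> = \<phi> (q^n*x)" using assms(1) by simp
  finally show ?case using Suc by simp
qed simp

lemma chain:
  fixes \<phi> :: "real \<Rightarrow> real"
  assumes "\<And>y. y \<in> Ivl b \<Longrightarrow> \<phi> y = \<phi> (q*y)" "x \<in> Ivl b"
    "(\<lambda>n. \<phi> (q^n*x)) \<longlonglongrightarrow> L"
  shows "\<phi> x = L"
  by (rule chain0[OF _ assms(3)]) (use assms(1)[OF Ivl_pow[OF assms(2)]] in simp)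

lemma ln_abs_bound: "0 < (y::real) \<Longrightarrow> \<bar>ln y\<bar> \<le> \<bar>y - 1\<bar> / min 1 y"
proof -
  assume y: "0 < y"
  show ?thesis
  proof (cases "y \<ge> 1")
    case True
    then show ?thesis using ln_le_minus_one[OF y] ln_ge_zero[OF True] by simp
  next
    case False
    have "ln (1/y) \<le> 1/y - 1" using y by (intro ln_le_minus_one) auto
    then have "- ln y \<le> (1 - y)/y" using y by (simp add: ln_div diff_divide_distrib)
    then show ?thesis using False y by simp
  qed
qed

abbreviation "AA u y \<equiv> 1 - (1-q)*y*(R y + u y * S y)"
abbreviation "CC u y \<equiv> 1 - (1-q)*y*(T y - u (q*y) * S y)"
abbreviation "gE u y \<equiv> (1/y) * ln (AA u y / CC u y)"

lemma adm_pos: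
  assumes "admissible q b R S T u" "y \<in> Ivl b"
  shows "AA u y > 0" "CC u y > 0"
  using assms by (auto simp: admissible_def)

lemma adm_cont: "admissible q b R S T u \<Longrightarrow> continuous_on (Ivl b) u"
  by (simp add: admissible_def)

lemma E_summable:
  assumes adm: "admissible q b R S T u" and x: "x \<in> Ivl b"
  shows "summable (\<lambda>n. (1-q)*q^n*x*gE u (q^n*x))"
proof (cases "x = 0")
  case True
  have "(\<lambda>n. (1-q)*q^n*x*gE u (q^n*x)) = (\<lambda>n. 0)"
    unfolding True by (simp only: mult_zero_left mult_zero_right)
  then show ?thesis by (simp only: summable_zero)
next
  case False
  have xpos: "x > 0" using Ivl_nonneg[OF x] False by linarith
  define y where "y n = q^n*x" for n
  have ypos: "y n > 0" for n using xpos q0 by (simp add: y_def)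
  have yI: "y n \<in> Ivl b" for n using Ivl_pow[OF x] by (simp add: y_def)
  have cu: "continuous_on (Ivl b) u" using adm_cont[OF adm] .
  define \<alpha> where "\<alpha> n = (1-q)*(R (y n) + u (y n) * S (y n))" for n
  define \<gamma> where "\<gamma> n = (1-q)*(T (y n) - u (q * y n) * S (y n))" for n
  have yl: "y \<longlonglongrightarrow> 0" unfolding y_def by (rule pow_lim)
  have lR: "(\<lambda>n. R (y n)) \<longlonglongrightarrow> R 0" unfolding y_def by (rule cont_lim[OF cR x])
  have lS: "(\<lambda>n. S (y n)) \<longlonglongrightarrow> S 0" unfolding y_def by (rule cont_lim[OF cS x])
  have lT: "(\<lambda>n. T (y n)) \<longlonglongrightarrow> T 0" unfolding y_def by (rule cont_lim[OF cT x])
  have lu: "(\<lambda>n. u (y n)) \<longlonglongrightarrow> u 0" unfolding y_def by (rule cont_lim[OF cu x])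
  have lu': "(\<lambda>n. u (q * y n)) \<longlonglongrightarrow> u 0" unfolding y_def by (rule cont_lim'[OF cu x])
  have al: "\<alpha> \<longlonglongrightarrow> (1-q)*(R 0 + u 0 * S 0)" unfolding \<alpha>_def
    by (rule tendsto_mult[OF tendsto_const tendsto_add[OF lR tendsto_mult[OF lu lS]]])
  have gl: "\<gamma> \<longlonglongrightarrow> (1-q)*(T 0 - u 0 * S 0)" unfolding \<gamma>_def
    by (rule tendsto_mult[OF tendsto_const tendsto_diff[OF lT tendsto_mult[OF lu' lS]]])
  have Aeq: "AA u (y n) = 1 - y n * \<alpha> n" for n by (simp add: \<alpha>_def algebra_simps)
  have Ceq: "CC u (y n) = 1 - y n * \<gamma> n" for n by (simp add: \<gamma>_def algebra_simps)
  have Al: "(\<lambda>n. AA u (y n)) \<longlonglongrightarrow> 1"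
    unfolding Aeq using tendsto_diff[OF tendsto_const tendsto_mult[OF yl al], of 1] by simp
  have Cl: "(\<lambda>n. CC u (y n)) \<longlonglongrightarrow> 1"
    unfolding Ceq using tendsto_diff[OF tendsto_const tendsto_mult[OF yl gl], of 1] by simp
  define \<beta> where "\<beta> n = \<bar>\<alpha> n\<bar> / min 1 (AA u (y n)) + \<bar>\<gamma> n\<bar> / min 1 (CC u (y n))" for n
  have "\<beta> \<longlonglongrightarrow> \<bar>(1-q)*(R 0 + u 0 * S 0)\<bar> / min 1 1 + \<bar>(1-q)*(T 0 - u 0 * S 0)\<bar> / min 1 1"
    unfolding \<beta>_def
    by (rule tendsto_add[OF tendsto_divide[OF tendsto_rabs[OF al] tendsto_min[OF tendsto_const Al]]
                            tendsto_divide[OF tendsto_rabs[OF gl] tendsto_min[OF tendsto_const Cl]]]) auto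
  then have "Bseq \<beta>" using convergent_imp_Bseq convergentI by blast
  then obtain K where K: "\<And>n. norm (\<beta> n) \<le> K" unfolding Bseq_def by auto
  show ?thesis
  proof (rule bounded_summable[where K=K])
    show "0 \<le> x" using xpos by simp
    fix n
    have Ap: "AA u (y n) > 0" and Cp: "CC u (y n) > 0" using adm_pos[OF adm yI] by auto
    have "\<bar>gE u (y n)\<bar> = \<bar>ln (AA u (y n)) - ln (CC u (y n))\<bar> / y n"
      using Ap Cp ypos[of n] by (simp add: ln_divide_pos abs_mult)
    also have "\<dots> \<le> (\<bar>ln (AA u (y n))\<bar> + \<bar>ln (CC u (y n))\<bar>) / y n"
      using ypos[of n] by (intro divide_right_mono) auto
    also have "\<dots> \<le> (\<bar>AA u (y n) - 1\<bar> / min 1 (AA u (y n)) + \<bar>CC u (y n) - 1\<bar> / min 1 (CC u (y n))) / y n"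
      using ypos[of n] by (intro divide_right_mono add_mono ln_abs_bound Ap Cp) auto
    also have "\<dots> = \<beta> n"
    proof -
      have yp: "y n > 0" by (rule ypos)
      have mA: "min 1 (AA u (y n)) > 0" and mC: "min 1 (CC u (y n)) > 0" using Ap Cp by auto
      have a1: "\<bar>AA u (y n) - 1\<bar> = y n * \<bar>\<alpha> n\<bar>" unfolding Aeq using yp by (simp add: abs_mult)
      have c1: "\<bar>CC u (y n) - 1\<bar> = y n * \<bar>\<gamma> n\<bar>" unfolding Ceq using yp by (simp add: abs_mult)
      have gen: "(y n * a / m + y n * c / m') / y n = a/m + c/m'" for a c m m' :: real
      proof -
        have "y n * a / m + y n * c / m' = y n * (a/m + c/m')" by (simp add: distrib_left)
        then show ?thesis using yp by simp
      qed
      show ?thesis unfolding a1 c1 \<beta>_def by (rule gen)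
    qed
    also have "\<dots> \<le> K" using K[of n] by simp
    finally show "\<bar>gE u (q^n*x)\<bar> \<le> K" by (simp add: y_def)
  qed
qed


abbreviation "gJ u y \<equiv> S y * Efun q R S T u y / AA u y"

lemma E_pos: "Efun q R S T u y > 0"
  by (simp add: Efun_def)

lemma E_def': "Efun q R S T u y = exp (1/(1-q) * qint q (gE u) y)"
  unfolding Efun_def by (rule refl)

lemma J_def': "Jfun q R S T u y = qint q (gJ u) y"
  unfolding Jfun_def by (rule refl)

lemma E_zero: "Efun q R S T u 0 = 1"
  unfolding E_def' qint_zero by simp

lemma J_zero: "Jfun q R S T u 0 = 0"
  unfolding J_def' qint_zero by simp

lemma E_tail:
  assumes adm: "admissible q b R S T u" and x: "x \<in> Ivl b"
  shows "(\<lambda>n. Efun q R S T u (q^n*x)) \<longlonglongrightarrow> 1"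
proof -
  have "(\<lambda>n. qint q (gE u) (q^n*x)) \<longlonglongrightarrow> 0"
    by (rule qint_tail[where g="gE u", OF E_summable[OF adm x]])
  then have "(\<lambda>n. exp (1/(1-q) * qint q (gE u) (q^n*x))) \<longlonglongrightarrow> exp (1/(1-q) * 0)"
    by (rule tendsto_exp[OF tendsto_mult[OF tendsto_const]])
  then show ?thesis unfolding E_def' by simp
qed

lemma E_shift:
  assumes adm: "admissible q b R S T u" and y: "y \<in> Ivl b"
  shows "Efun q R S T u y = Efun q R S T u (q*y) * AA u y / CC u y"
proof (cases "y = 0")
  case True
  then show ?thesis by simp
next
  case False
  have yp: "y > 0" using Ivl_nonneg[OF y] False by linarith
  have Ap: "AA u y > 0" "CC u y > 0" using adm_pos[OF adm y] by auto
  have qs: "qint q (gE u) y = (1-q)*y*gE u y + qint q (gE u) (q*y)"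
    by (rule qint_shift[where g="gE u", OF E_summable[OF adm y]])
  have l: "1/(1-q) * ((1-q)*y*gE u y) = ln (AA u y / CC u y)"
    using yp q1 by simp
  have "Efun q R S T u y = exp (1/(1-q)*((1-q)*y*gE u y) + 1/(1-q)*qint q (gE u) (q*y))"
    unfolding E_def'[of u y] qs by (simp only: distrib_left)
  also have "\<dots> = exp (ln (AA u y / CC u y)) * Efun q R S T u (q*y)"
    by (simp only: exp_add l E_def')
  also have "\<dots> = (AA u y / CC u y) * Efun q R S T u (q*y)"
    using Ap by simp
  finally show ?thesis by simp
qed

lemma J_summable:
  assumes adm: "admissible q b R S T u" and x: "x \<in> Ivl b"
  shows "summable (\<lambda>n. (1-q)*q^n*x*gJ u (q^n*x))"
proof -
  have cu: "continuous_on (Ivl b) u" using adm_cont[OF adm] .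
  have lA: "(\<lambda>n. AA u (q^n*x)) \<longlonglongrightarrow> 1"
  proof -
    have "(\<lambda>n. 1 - (1-q)*(q^n*x)*(R (q^n*x) + u (q^n*x)*S (q^n*x))) \<longlonglongrightarrow> 1 - (1-q)*0*(R 0 + u 0*S 0)"
      by (rule tendsto_diff[OF tendsto_const tendsto_mult[OF tendsto_mult[OF tendsto_const pow_lim]
            tendsto_add[OF cont_lim[OF cR x] tendsto_mult[OF cont_lim[OF cu x] cont_lim[OF cS x]]]]])
    then show ?thesis by simp
  qed
  have "(\<lambda>n. gJ u (q^n*x)) \<longlonglongrightarrow> S 0 * 1 / 1"
    by (rule tendsto_divide[OF tendsto_mult[OF cont_lim[OF cS x] E_tail[OF adm x]] lA]) simp
  then have "Bseq (\<lambda>n. gJ u (q^n*x))" using convergent_imp_Bseq convergentI by blast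
  then obtain K where K: "\<And>n. norm (gJ u (q^n*x)) \<le> K" unfolding Bseq_def by auto
  show ?thesis
    by (rule bounded_summable[where K=K and g="gJ u"]) (use K Ivl_nonneg[OF x] in auto)
qed

lemma J_tail:
  assumes adm: "admissible q b R S T u" and x: "x \<in> Ivl b"
  shows "(\<lambda>n. Jfun q R S T u (q^n*x)) \<longlonglongrightarrow> 0"
  unfolding J_def' by (rule qint_tail[where g="gJ u", OF J_summable[OF adm x]])

lemma J_shift:
  assumes adm: "admissible q b R S T u" and y: "y \<in> Ivl b"
  shows "Jfun q R S T u y = Jfun q R S T u (q*y) + (1-q)*y*gJ u y"
proof -
  have "qint q (gJ u) y = (1-q)*y*gJ u y + qint q (gJ u) (q*y)"
    by (rule qint_shift[where g="gJ u", OF J_summable[OF adm y]])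
  then show ?thesis unfolding J_def' by linarith
qed

lemma part1:
  assumes adm0: "admissible q b R S T u0" and D2: "Bdefined q b R S T t2 u0"
    and admv: "admissible q b R S T (Bplus q R S T t2 u0)"
    and D1: "Bdefined q b R S T t1 (Bplus q R S T t2 u0)"
  shows "Bdefined q b R S T (t1 + t2) u0 \<and>
    (\<forall>x\<in>Ivl b. Bplus q R S T t1 (Bplus q R S T t2 u0) x = Bplus q R S T (t1 + t2) u0 x)"
proof -
  define v where "v = Bplus q R S T t2 u0"
  define E0 where "E0 = Efun q R S T u0"
  define J0 where "J0 = Jfun q R S T u0"
  define Ev where "Ev = Efun q R S T v"
  define Jv where "Jv = Jfun q R S T v"
  define D where "D y = 1 + t2 * J0 y" for y
  have admv': "admissible q b R S T v" using admv by (simp add: v_def)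
  have Dnz: "D y \<noteq> 0" if y: "y \<in> Ivl b" for y
    using D2 y by (simp add: Bdefined_def D_def J0_def)
  have veq: "v y = u0 y + t2 * E0 y / D y" for y
    by (simp add: v_def Bplus_def E0_def J0_def D_def)
  have E0s: "E0 y = E0 (q*y) * AA u0 y / CC u0 y" if y: "y \<in> Ivl b" for y
    unfolding E0_def by (rule E_shift[OF adm0 y])
  have Evs: "Ev y = Ev (q*y) * AA v y / CC v y" if y: "y \<in> Ivl b" for y
    unfolding Ev_def by (rule E_shift[OF admv' y])
  have J0s: "J0 y = J0 (q*y) + (1-q)*y*(S y * E0 y / AA u0 y)" if y: "y \<in> Ivl b" for y
    unfolding J0_def E0_def by (rule J_shift[OF adm0 y])
  have Jvs: "Jv y = Jv (q*y) + (1-q)*y*(S y * Ev y / AA v y)" if y: "y \<in> Ivl b" for y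
    unfolding Jv_def Ev_def by (rule J_shift[OF admv' y])
  have key: "(1-q)*y*S y*E0 y = (J0 y - J0 (q*y)) * AA u0 y" if y: "y \<in> Ivl b" for y
  proof -
    have A: "AA u0 y > 0" using adm_pos[OF adm0 y] by simp
    have "J0 y - J0 (q*y) = (1-q)*y*(S y * E0 y / AA u0 y)" using J0s[OF y] by simp
    then show ?thesis using A by (simp add: field_simps)
  qed
  have Av: "AA v y = AA u0 y * D (q*y) / D y" if y: "y \<in> Ivl b" for y
    unfolding veq by (rule alg1[OF Dnz[OF y] D_def D_def key[OF y] refl])
  have Cv: "CC v y = CC u0 y * D y / D (q*y)" if y: "y \<in> Ivl b" for y
  proof -
    have A: "AA u0 y > 0" "CC u0 y > 0" using adm_pos[OF adm0 y] by auto
    show ?thesis unfolding veq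
      by (rule alg2[OF Dnz[OF Ivl_q[OF y]] _ _ D_def D_def key[OF y] E0s[OF y] refl]) (use A in auto)
  qed
  have E0p: "E0 y > 0" for y unfolding E0_def by (rule E_pos)
  have Dl: "(\<lambda>n. D (q^n*x)) \<longlonglongrightarrow> 1" if x: "x \<in> Ivl b" for x
  proof -
    have "(\<lambda>n. D (q^n*x)) \<longlonglongrightarrow> 1 + t2 * 0" unfolding D_def J0_def
      by (rule tendsto_add[OF tendsto_const tendsto_mult[OF tendsto_const J_tail[OF adm0 x]]])
    then show ?thesis by simp
  qed
  have EvEq: "Ev x = E0 x / D x ^ 2" if x: "x \<in> Ivl b" for x
  proof -
    have "Ev x * D x ^ 2 / E0 x = 1"
    proof (rule chain[where \<phi>="\<lambda>y. Ev y * D y ^ 2 / E0 y", OF _ x])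
      fix y assume y: "y \<in> Ivl b"
      have A: "AA u0 y > 0" "CC u0 y > 0" using adm_pos[OF adm0 y] by auto
      show "Ev y * D y ^ 2 / E0 y = Ev (q*y) * D (q*y) ^ 2 / E0 (q*y)"
        by (rule alg3[OF A Dnz[OF y] Dnz[OF Ivl_q[OF y]] E0p Evs[OF y] Av[OF y] Cv[OF y] E0s[OF y]])
    next
      have "(\<lambda>n. Ev (q^n*x) * D (q^n*x) ^ 2 / E0 (q^n*x)) \<longlonglongrightarrow> 1 * 1 ^ 2 / 1"
        unfolding Ev_def E0_def
        by (rule tendsto_divide[OF tendsto_mult[OF E_tail[OF admv' x] tendsto_power[OF Dl[OF x]]] E_tail[OF adm0 x]]) simp
      then show "(\<lambda>n. Ev (q^n*x) * D (q^n*x) ^ 2 / E0 (q^n*x)) \<longlonglongrightarrow> 1" by simp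
    qed
    then show ?thesis using E0p[of x] Dnz[OF x] by (simp add: field_simps)
  qed
  have JvEq: "Jv x = J0 x / D x" if x: "x \<in> Ivl b" for x
  proof -
    have "Jv x - J0 x / D x = 0"
    proof (rule chain[where \<phi>="\<lambda>y. Jv y - J0 y / D y", OF _ x])
      fix y assume y: "y \<in> Ivl b"
      have A: "AA u0 y > 0" using adm_pos[OF adm0 y] by auto
      show "Jv y - J0 y / D y = Jv (q*y) - J0 (q*y) / D (q*y)"
        by (rule alg4[OF Dnz[OF y] Dnz[OF Ivl_q[OF y]] A D_def D_def Av[OF y] EvEq[OF y] Jvs[OF y] key[OF y]])
    next
      have "(\<lambda>n. Jv (q^n*x) - J0 (q^n*x) / D (q^n*x)) \<longlonglongrightarrow> 0 - 0 / 1"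
        unfolding Jv_def J0_def
        by (rule tendsto_diff[OF J_tail[OF admv' x] tendsto_divide[OF J_tail[OF adm0 x] Dl[OF x[unfolded J0_def]]]]) simp
      then show "(\<lambda>n. Jv (q^n*x) - J0 (q^n*x) / D (q^n*x)) \<longlonglongrightarrow> 0" by simp
    qed
    then show ?thesis by simp
  qed
  have fin: "1 + (t1+t2) * J0 x \<noteq> 0 \<and>
      Bplus q R S T t1 v x = Bplus q R S T (t1 + t2) u0 x" if x: "x \<in> Ivl b" for x
  proof -
    have "1 + t1 * Jv x \<noteq> 0"
      using D1 x by (simp add: Bdefined_def v_def Jv_def)
    then have d1: "1 + t1 * (J0 x / D x) \<noteq> 0" using JvEq[OF x] by simp
    have "Bplus q R S T t1 v x = u0 x + t2 * E0 x / D x + t1 * (E0 x / D x ^ 2) / (1 + t1 * (J0 x / D x))"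
    proof -
      have "Bplus q R S T t1 v x = v x + t1 * Ev x / (1 + t1 * Jv x)"
        by (simp add: Bplus_def Ev_def Jv_def)
      then show ?thesis unfolding veq[of x] EvEq[OF x] JvEq[OF x] .
    qed
    moreover have "Bplus q R S T (t1 + t2) u0 x = u0 x + (t1+t2) * E0 x / (1 + (t1+t2) * J0 x)"
      by (simp add: Bplus_def E0_def J0_def)
    ultimately show ?thesis using alg5[OF Dnz[OF x] D_def d1, of "u0 x" "E0 x"] by simp
  qed
  show ?thesis
    using fin by (auto simp: Bdefined_def J0_def v_def)
qed

lemma part2:
  assumes adm0: "admissible q b R S T u0" and r0: "riccati_sol q b R S T V u0"
    and cu: "continuous_on (Ivl b) u" and ru: "riccati_sol q b R S T V u"
    and apos: "\<forall>x\<in>Ivl b. 1 - (1 - q) * x * (R x + S x * u x) > 0"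
  shows "Bdefined q b R S T (u 0 - u0 0) u0 \<and>
    (\<forall>x\<in>Ivl b. u x = Bplus q R S T (u 0 - u0 0) u0 x)"
proof -
  define t where "t = u 0 - u0 0"
  define w where "w y = u y - u0 y" for y
  define E0 where "E0 = Efun q R S T u0"
  define J0 where "J0 = Jfun q R S T u0"
  have E0p: "E0 y > 0" for y unfolding E0_def by (rule E_pos)
  have cu0: "continuous_on (Ivl b) u0" using adm_cont[OF adm0] .
  have rel: "w y * CC u0 y = w (q*y) * (1 - (1-q)*y*(R y + S y * u y))"
    if y: "y \<in> Ivl b" and yne: "y \<noteq> 0" for y
  proof -
    have h: "(1-q)*y \<noteq> 0" using q1 yne by simp
    have e1: "V y = (u y - u (q*y))/((1-q)*y) - T y*u y + R y*u (q*y) + S y*u y*u (q*y)"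
      using ru y yne unfolding riccati_sol_def qderiv_def by blast
    have e0: "V y = (u0 y - u0 (q*y))/((1-q)*y) - T y*u0 y + R y*u0 (q*y) + S y*u0 y*u0 (q*y)"
      using r0 y yne unfolding riccati_sol_def qderiv_def by blast
    show ?thesis unfolding w_def by (rule alg6[OF h e1 e0])
  qed
  have wl: "(\<lambda>n. w (q^n*x)) \<longlonglongrightarrow> t" if x: "x \<in> Ivl b" for x
    unfolding w_def t_def by (rule tendsto_diff[OF cont_lim[OF cu x] cont_lim[OF cu0 x]])
  have wprop: "w y = 0 \<longleftrightarrow> w (q*y) = 0" if y: "y \<in> Ivl b" and yne: "y \<noteq> 0" for y
  proof -
    have C: "CC u0 y > 0" using adm_pos[OF adm0 y] by auto
    have A: "1 - (1-q)*y*(R y + S y * u y) > 0" using apos y by auto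
    show ?thesis
    proof
      assume "w y = 0"
      then have "w (q*y) * (1 - (1-q)*y*(R y + S y * u y)) = 0" using rel[OF y yne] by simp
      then show "w (q*y) = 0" using A by simp
    next
      assume "w (q*y) = 0"
      then have "w y * CC u0 y = 0" using rel[OF y yne] by simp
      then show "w y = 0" using C by simp
    qed
  qed
  have allnz: "w (q^n*x) = 0 \<longleftrightarrow> w x = 0" if x: "x \<in> Ivl b" and xp: "x > 0" for x n
  proof (induction n)
    case (Suc n)
    have yI: "q^n*x \<in> Ivl b" by (rule Ivl_pow[OF x])
    have yne: "q^n*x \<noteq> 0" using q0 xp by simp
    have "w (q^Suc n * x) = 0 \<longleftrightarrow> w (q^n*x) = 0"
      using wprop[OF yI yne] by (simp add: mult.assoc)
    then show ?case using Suc by simp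
  qed simp
  have inv: "E0 (q*(q^n*x)) / w (q*(q^n*x)) - J0 (q*(q^n*x)) = E0 (q^n*x) / w (q^n*x) - J0 (q^n*x)"
    if x: "x \<in> Ivl b" and xp: "x > 0" and wx: "w x \<noteq> 0" for x n
  proof -
    define y where "y = q^n*x"
    have y: "y \<in> Ivl b" unfolding y_def by (rule Ivl_pow[OF x])
    have yne: "y \<noteq> 0" using q0 xp by (simp add: y_def)
    have wy: "w y \<noteq> 0" using allnz[OF x xp, of n] wx by (simp add: y_def)
    have wqy: "w (q*y) \<noteq> 0" using wprop[OF y yne] wy by simp
    have A: "AA u0 y > 0" "CC u0 y > 0" using adm_pos[OF adm0 y] by auto
    have "E0 y / w y - J0 y = E0 (q*y) / w (q*y) - J0 (q*y)"
    proof (rule alg7[OF A refl refl w_def wy wqy rel[OF y yne]])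
      show "E0 y = E0 (q*y) * AA u0 y / CC u0 y" unfolding E0_def by (rule E_shift[OF adm0 y])
      show "J0 y = J0 (q*y) + (1-q)*y*(S y * E0 y / AA u0 y)"
        unfolding J0_def E0_def by (rule J_shift[OF adm0 y])
    qed
    then show ?thesis by (simp add: y_def)
  qed
  have main: "1 + t * J0 x \<noteq> 0 \<and> u x = u0 x + t * E0 x / (1 + t * J0 x)" if x: "x \<in> Ivl b" for x
  proof (cases "x = 0")
    case True
    then show ?thesis by (simp add: J0_def E0_def J_zero E_zero t_def)
  next
    case False
    have xp: "x > 0" using Ivl_nonneg[OF x] False by linarith
    have El: "(\<lambda>n. E0 (q^n*x)) \<longlonglongrightarrow> 1" unfolding E0_def by (rule E_tail[OF adm0 x])
    have Jl: "(\<lambda>n. J0 (q^n*x)) \<longlonglongrightarrow> 0" unfolding J0_def by (rule J_tail[OF adm0 x])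
    show ?thesis
    proof (cases "t = 0")
      case False
      have "eventually (\<lambda>n. w (q^n*x) \<noteq> 0) sequentially"
        by (rule tendsto_imp_eventually_ne[OF wl[OF x] False])
      then obtain N where "w (q^N*x) \<noteq> 0" by (auto simp: eventually_sequentially)
      then have wx: "w x \<noteq> 0" using allnz[OF x xp] by simp
      have "E0 x / w x - J0 x = 1 / t - 0"
      proof (rule chain0[where \<phi>="\<lambda>y. E0 y / w y - J0 y"])
        show "E0 (q*(q^n*x)) / w (q*(q^n*x)) - J0 (q*(q^n*x)) = E0 (q^n*x) / w (q^n*x) - J0 (q^n*x)" for n
          by (rule inv[OF x xp wx])
        show "(\<lambda>n. E0 (q^n*x) / w (q^n*x) - J0 (q^n*x)) \<longlonglongrightarrow> 1 / t - 0"
          by (rule tendsto_diff[OF tendsto_divide[OF El wl[OF x] False] Jl])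
      qed
      then have "1 + t * J0 x \<noteq> 0 \<and> w x = t * E0 x / (1 + t * J0 x)"
        using alg8[OF False wx E0p] by simp
      then show ?thesis by (simp add: w_def)
    next
      case True
      have "w x = 0"
      proof (rule ccontr)
        assume wx: "w x \<noteq> 0"
        define K where "K = E0 x / w x - J0 x"
        have c: "E0 (q^n*x) / w (q^n*x) - J0 (q^n*x) = K" for n
          unfolding K_def
          by (rule chain_const[where \<phi>="\<lambda>y. E0 y / w y - J0 y"]) (rule inv[OF x xp wx])
        have "E0 (q^n*x) = (K + J0 (q^n*x)) * w (q^n*x)" for n
        proof -
          have "w (q^n*x) \<noteq> 0" using allnz[OF x xp] wx by simp
          then show ?thesis using c[of n] by (simp add: field_simps)
        qed
        then have "(\<lambda>n. E0 (q^n*x)) = (\<lambda>n. (K + J0 (q^n*x)) * w (q^n*x))" by simp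
        moreover have "(\<lambda>n. (K + J0 (q^n*x)) * w (q^n*x)) \<longlonglongrightarrow> (K + 0) * t"
          by (rule tendsto_mult[OF tendsto_add[OF tendsto_const Jl] wl[OF x]])
        ultimately have "(\<lambda>n. E0 (q^n*x)) \<longlonglongrightarrow> 0" using True by simp
        from LIMSEQ_unique[OF El this] show False by simp
      qed
      then show ?thesis using True by (simp add: w_def)
    qed
  qed
  show ?thesis
    using main unfolding t_def by (auto simp: Bdefined_def Bplus_def E0_def J0_def)
qed

end

theorem proposition4:
  fixes q :: real and b :: ereal and R S T :: "real \<Rightarrow> real"
  assumes q: "0 < q" "q < 1"
    and b: "0 < b"
    and cont: "continuous_on (Ivl b) R" "continuous_on (Ivl b) S" "continuous_on (Ivl b) T"
  shows
    "(\<forall>(t1::real) (t2::real) (u0::real \<Rightarrow> real).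
        admissible q b R S T u0 \<and>
        Bdefined q b R S T t2 u0 \<and>
        admissible q b R S T (Bplus q R S T t2 u0) \<and>
        Bdefined q b R S T t1 (Bplus q R S T t2 u0) \<and>
        (\<forall>x\<in>Ivl b. 1 - (1 - q) * x * (R x + S x *
              Bplus q R S T t1 (Bplus q R S T t2 u0) x) > 0)
      \<longrightarrow> Bdefined q b R S T (t1 + t2) u0 \<and>
          (\<forall>x\<in>Ivl b. Bplus q R S T t1 (Bplus q R S T t2 u0) x
                       = Bplus q R S T (t1 + t2) u0 x))
   \<and>
    (\<forall>(V::real \<Rightarrow> real) (u0::real \<Rightarrow> real) (u::real \<Rightarrow> real).
        admissible q b R S T u0 \<and> riccati_sol q b R S T V u0 \<and>
        continuous_on (Ivl b) u \<and> riccati_sol q b R S T V u \<and>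
        (\<forall>x\<in>Ivl b. 1 - (1 - q) * x * (R x + S x * u x) > 0)
      \<longrightarrow> Bdefined q b R S T (u 0 - u0 0) u0 \<and>
          (\<forall>x\<in>Ivl b. u x = Bplus q R S T (u 0 - u0 0) u0 x))"
  using part1[OF q b cont] part2[OF q b cont] by blast

end
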